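(* A matrix $M\in\mathbb{R}_+^{p\times q}$ with $\operatorname{rank}(M)\ge 2$ is a slack matrix of some polytope if and only if $$\operatorname{conv}(\text{rows of }M)=\operatorname{aff}(\text{rows of }M)\cap\mathbb{R}_+^q.$$
   Context: For a polytope $P\subseteq\mathbb{R}^n$ with $\dim(P)\ge 1$, a slack matrix of $P$ is any matrix $S=[\mathbb{1},V]\cdot[w,-W]^T\in\mathbb{R}^{p\times q}$ (so $S_{ij}=w_j-W_jv_i$, with $v_i$ the $i$th row of $V$ and $W_j$ the $j$th row of $W$), where $V\in\mathbb{R}^{p\times n}$ satisfies $P=\operatorname{conv}(\text{rows of }V)$ and $W\in\mathbb{R}^{q\times n}$, $w\in\mathbb{R}^q$ satisfy $P=\{x\in\mathbb{R}^n: Wx\le w\}$. A matrix is a slack matrix of some polytope if it is a slack matrix of some polytope of dimension at least one. $\operatorname{aff}$ denotes affine hull. *)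

theory Defs
  imports "HOL-Analysis.Analysis" "HOL-Library.Function_Algebras"
begin

text \<open>Points of R^n are encoded as functions nat => real vanishing outside {0..<n}.
  To use the library notions convex hull / affine hull on them, we equip
  nat => real (more generally 'a => 'b for a real vector space 'b) with the
  pointwise real vector space structure.\<close>

instantiation "fun" :: (type, real_vector) real_vector
begin
definition scaleR_fun :: "real \<Rightarrow> ('a \<Rightarrow> 'b) \<Rightarrow> 'a \<Rightarrow> 'b"
  where "scaleR_fun r f = (\<lambda>x. r *\<^sub>R f x)"
instance
  by standard (simp_all add: scaleR_fun_def fun_eq_iff scaleR_add_right scaleR_add_left)
end

definition Rn :: "nat \<Rightarrow> (nat \<Rightarrow> real) set" where
  "Rn n = {x. \<forall>k\<ge>n. x k = 0}"

text \<open>S is a slack matrix of the polytope P in R^n: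
  S = [1,V] [w,-W]^T with P = conv(rows of V) and P = {x. W x \<le> w}.\<close>
definition slack_matrix_of :: "nat \<Rightarrow> (nat \<Rightarrow> real) set \<Rightarrow> real^'q^'p \<Rightarrow> bool" where
  "slack_matrix_of n P S \<longleftrightarrow>
     (\<exists>(V :: 'p \<Rightarrow> nat \<Rightarrow> real) (W :: 'q \<Rightarrow> nat \<Rightarrow> real) (w :: 'q \<Rightarrow> real).
        (\<forall>i. V i \<in> Rn n) \<and> (\<forall>j. W j \<in> Rn n) \<and>
        P = convex hull (range V) \<and>
        P = {x \<in> Rn n. \<forall>j. (\<Sum>k<n. W j k * x k) \<le> w j} \<and>
        (\<forall>i j. S $ i $ j = w j - (\<Sum>k<n. W j k * V i k)))"

definition dim_ge_1 :: "(nat \<Rightarrow> real) set \<Rightarrow> bool" where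
  "dim_ge_1 P \<longleftrightarrow> (\<exists>x\<in>P. \<exists>y\<in>P. x \<noteq> y)"

definition is_slack_matrix :: "real^'q^'p \<Rightarrow> bool" where
  "is_slack_matrix S \<longleftrightarrow> (\<exists>n P. dim_ge_1 P \<and> slack_matrix_of n P S)"

end

theory Submission
  imports Defs
begin

lemma Rn_subspace: "subspace (Rn n)"
  unfolding subspace_def Rn_def by (simp add: scaleR_fun_def)

lemma rows_eq: "rows (M::real^'q^'p) = range (\<lambda>i. M $ i)"
  unfolding rows_def row_def by (auto simp: vec_eq_iff)

lemma fwd:
  fixes M :: "real^'q^'p"
  assumes "slack_matrix_of n P M"
  shows "convex hull (rows M) = affine hull (rows M) \<inter> {x. \<forall>j. 0 \<le> x $ j}"
proof -
  obtain V :: "'p \<Rightarrow> nat \<Rightarrow> real" and W :: "'q \<Rightarrow> nat \<Rightarrow> real" and w where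
    V: "\<forall>i. V i \<in> Rn n" and Wn: "\<forall>j. W j \<in> Rn n" and P1: "P = convex hull (range V)"
    and P2: "P = {x \<in> Rn n. \<forall>j. (\<Sum>k<n. W j k * x k) \<le> w j}"
    and S: "\<forall>i j. M $ i $ j = w j - (\<Sum>k<n. W j k * V i k)"
    using assms unfolding slack_matrix_of_def by blast
  define L :: "(nat \<Rightarrow> real) \<Rightarrow> real^'q" where "L x = (\<chi> j. - (\<Sum>k<n. W j k * x k))" for x
  define c :: "real^'q" where "c = (\<chi> j. w j)"
  define \<psi> where "\<psi> x = c + L x" for x
  have psi_comp: "\<psi> x $ j = w j - (\<Sum>k<n. W j k * x k)" for x j
    by (simp add: \<psi>_def c_def L_def)
  have linL: "linear L"
    by (rule linearI) (auto simp: L_def vec_eq_iff scaleR_fun_def sum.distrib sum_distrib_left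
        algebra_simps sum_negf)
  have rowsM: "rows M = \<psi> ` range V"
    unfolding rows_eq by (auto simp: vec_eq_iff psi_comp S image_iff)
  have imgpsi: "\<psi> ` S = (\<lambda>x. c + x) ` (L ` S)" for S
    by (simp add: image_image \<psi>_def[abs_def])
  have conv: "convex hull (rows M) = \<psi> ` P"
    unfolding rowsM P1 imgpsi convex_hull_translation convex_hull_linear_image[OF linL] ..
  have affRn: "affine hull (range V) \<subseteq> Rn n"
    using V by (intro hull_minimal subspace_imp_affine Rn_subspace) auto
  have aff: "affine hull (rows M) \<subseteq> \<psi> ` (affine hull (range V))"
  proof (rule hull_minimal)
    show "rows M \<subseteq> \<psi> ` (affine hull (range V))"
      unfolding rowsM by (intro image_mono hull_subset)
    show "affine (\<psi> ` (affine hull (range V)))"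
      unfolding affine_def[of "\<psi> ` (affine hull (range V))"]
    proof (intro ballI allI impI)
      fix y1 y2 u v assume y1: "y1 \<in> \<psi> ` (affine hull (range V))"
        and y2: "y2 \<in> \<psi> ` (affine hull (range V))" and uv: "(u::real) + v = 1"
      obtain x1 where x1: "x1 \<in> affine hull (range V)" "y1 = \<psi> x1" using y1 by auto
      obtain x2 where x2: "x2 \<in> affine hull (range V)" "y2 = \<psi> x2" using y2 by auto
      have "u *\<^sub>R x1 + v *\<^sub>R x2 \<in> affine hull (range V)"
        using affine_affine_hull[of "range V"] x1 x2 uv unfolding affine_def by blast
      moreover have "u *\<^sub>R y1 + v *\<^sub>R y2 = \<psi> (u *\<^sub>R x1 + v *\<^sub>R x2)"
      proof -
        have "u * (w j - (\<Sum>k<n. W j k * x1 k)) + v * (w j - (\<Sum>k<n. W j k * x2 k))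
            = w j - (\<Sum>k<n. W j k * (u * x1 k + v * x2 k))" for j
        proof -
          have "w j = (u + v) * w j" using uv by simp
          then show ?thesis
            by (simp add: sum.distrib sum_distrib_left algebra_simps)
        qed
        then show ?thesis
          by (simp add: vec_eq_iff psi_comp x1 x2 scaleR_fun_def)
      qed
      ultimately show "u *\<^sub>R y1 + v *\<^sub>R y2 \<in> \<psi> ` (affine hull (range V))" by blast
    qed
  qed
  show ?thesis
  proof
    show "convex hull (rows M) \<subseteq> affine hull (rows M) \<inter> {x. \<forall>j. 0 \<le> x $ j}"
    proof
      fix y assume y: "y \<in> convex hull (rows M)"
      then obtain x where "x \<in> P" "y = \<psi> x" using conv by auto
      then have "\<forall>j. 0 \<le> y $ j" using P2 by (auto simp: psi_comp)
      then show "y \<in> affine hull (rows M) \<inter> {x. \<forall>j. 0 \<le> x $ j}"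
        using y convex_hull_subset_affine_hull by blast
    qed
    show "affine hull (rows M) \<inter> {x. \<forall>j. 0 \<le> x $ j} \<subseteq> convex hull (rows M)"
    proof
      fix y assume y: "y \<in> affine hull (rows M) \<inter> {x. \<forall>j. 0 \<le> x $ j}"
      then obtain x where x: "x \<in> affine hull (range V)" "y = \<psi> x" using aff by blast
      have "x \<in> P" using x y affRn unfolding P2 by (auto simp: psi_comp)
      then show "y \<in> convex hull (rows M)" using conv x by auto
    qed
  qed
qed


lemma bwd:
  fixes M :: "real^'q^'p"
  assumes hyp: "convex hull (rows M) = affine hull (rows M) \<inter> {x. \<forall>j. 0 \<le> x $ j}"
    and i12: "M $ i1 \<noteq> M $ i2"
  shows "is_slack_matrix M"
proof -
  define a where "a = M $ i1"
  have arows: "a \<in> rows M" unfolding rows_eq a_def by auto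
  define D where "D = (\<lambda>x. -a + x) ` rows M"
  obtain B where BD: "B \<subseteq> D" and indB: "independent B" and DB: "D \<subseteq> span B"
    and "card B = dim D"
    by (rule basis_exists)
  have finB: "finite B" using indB by (rule finiteI_independent)
  define n where "n = card B"
  obtain b where bij0: "bij_betw b {0..<n} B"
    using ex_bij_betw_nat_finite[OF finB] unfolding n_def by (elim exE)
  have bij: "bij_betw b {..<n} B" using bij0 by (simp only: atLeast0LessThan)
  have bB: "b k \<in> B" if "k < n" for k
    using bij_betwE[OF bij] that by simp
  define L :: "(nat \<Rightarrow> real) \<Rightarrow> real^'q" where "L x = (\<Sum>k<n. x k *\<^sub>R b k)" for x
  define \<psi> where "\<psi> x = a + L x" for x
  have linL: "linear L"
    by (rule linearI) (auto simp: L_def scaleR_fun_def sum.distrib scaleR_add_left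
        scaleR_sum_right)
  have imgpsi: "\<psi> ` S = (\<lambda>x. a + x) ` (L ` S)" for S
    by (simp add: image_image \<psi>_def[abs_def])
  have affrows: "affine hull (rows M) = (\<lambda>x. a + x) ` span D"
    unfolding D_def by (rule affine_hull_span_gen[OF hull_inc[OF arows]])
  have LspanD: "L x \<in> span D" for x
  proof -
    have "L x \<in> span B" unfolding L_def
      by (intro span_sum span_scale span_base bB) simp
    then show ?thesis using span_mono[OF BD] by blast
  qed
  have psi_aff: "\<psi> x \<in> affine hull (rows M)" for x
    unfolding affrows \<psi>_def using LspanD by blast
  have surj: "\<exists>x. x \<in> Rn n \<and> \<psi> x = M $ i" for i
  proof -
    have "-a + M $ i \<in> span B" using DB unfolding D_def rows_eq by blast
    then obtain u where u: "-a + M $ i = (\<Sum>v\<in>B. u v *\<^sub>R v)"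
      using span_finite[OF finB] by blast
    also have "\<dots> = (\<Sum>k<n. u (b k) *\<^sub>R b k)"
      using sum.reindex_bij_betw[OF bij, of "\<lambda>v. u v *\<^sub>R v"] by simp
    finally have eq: "-a + M $ i = (\<Sum>k<n. u (b k) *\<^sub>R b k)" .
    define x where "x k = (if k < n then u (b k) else 0)" for k
    have "x \<in> Rn n" unfolding Rn_def x_def by simp
    moreover have "L x = -a + M $ i" unfolding eq L_def x_def by (rule sum.cong) auto
    ultimately show ?thesis unfolding \<psi>_def by (intro exI[of _ x]) simp
  qed
  then obtain V where V: "\<And>i. V i \<in> Rn n" and psiV: "\<And>i. \<psi> (V i) = M $ i"
    by metis
  have inj: "x = y" if x: "x \<in> Rn n" and y: "y \<in> Rn n" and e: "\<psi> x = \<psi> y" for x y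
  proof -
    define u where "u v = (x - y) (inv_into {..<n} b v)" for v
    have injb: "inj_on b {..<n}" using bij by (simp add: bij_betw_def)
    have "L (x - y) = 0" using e linear_diff[OF linL, of x y] by (simp add: \<psi>_def)
    then have "(\<Sum>k<n. u (b k) *\<^sub>R b k) = 0"
      unfolding L_def u_def by (simp add: inv_into_f_f[OF injb])
    then have "(\<Sum>v\<in>B. u v *\<^sub>R v) = 0"
      using sum.reindex_bij_betw[OF bij, of "\<lambda>v. u v *\<^sub>R v"] by simp
    then have u0: "\<forall>v\<in>B. u v = 0" using indB dependent_finite[OF finB] by blast
    show ?thesis
    proof
      fix k
      show "x k = y k"
      proof (cases "k < n")
        case True
        then have "u (b k) = 0" using u0 bB by blast
        then show ?thesis using True by (simp add: u_def inv_into_f_f[OF injb])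
      next
        case False
        then show ?thesis using x y by (simp add: Rn_def)
      qed
    qed
  qed
  define W :: "'q \<Rightarrow> nat \<Rightarrow> real" where "W j k = (if k < n then - (b k $ j) else 0)" for j k
  define w :: "'q \<Rightarrow> real" where "w j = a $ j" for j
  have psi_comp: "w j - (\<Sum>k<n. W j k * x k) = \<psi> x $ j" for x j
    by (simp add: W_def w_def \<psi>_def L_def sum_negf mult.commute)
  define P where "P = convex hull (range V)"
  have rowsM: "rows M = \<psi> ` range V"
    unfolding rows_eq by (auto simp: psiV image_iff)
  have conv: "convex hull (rows M) = \<psi> ` P"
    unfolding rowsM P_def imgpsi convex_hull_translation convex_hull_linear_image[OF linL] ..
  have PRn: "P \<subseteq> Rn n"
    unfolding P_def using V by (intro hull_minimal subspace_imp_convex Rn_subspace) auto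
  have Peq: "P = {x \<in> Rn n. \<forall>j. (\<Sum>k<n. W j k * x k) \<le> w j}"
  proof
    show "P \<subseteq> {x \<in> Rn n. \<forall>j. (\<Sum>k<n. W j k * x k) \<le> w j}"
    proof
      fix x assume x: "x \<in> P"
      then have "\<psi> x \<in> convex hull (rows M)" using conv by blast
      then have h: "\<forall>j. 0 \<le> \<psi> x $ j" using hyp by blast
      have "(\<Sum>k<n. W j k * x k) \<le> w j" for j
        using h[rule_format, of j] psi_comp[of j x] by linarith
      then show "x \<in> {x \<in> Rn n. \<forall>j. (\<Sum>k<n. W j k * x k) \<le> w j}"
        using x PRn by blast
    qed
    show "{x \<in> Rn n. \<forall>j. (\<Sum>k<n. W j k * x k) \<le> w j} \<subseteq> P"
    proof
      fix x assume x: "x \<in> {x \<in> Rn n. \<forall>j. (\<Sum>k<n. W j k * x k) \<le> w j}"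
      have "0 \<le> \<psi> x $ j" for j
        using x psi_comp[of j x] by (metis (mono_tags, lifting) diff_ge_0_iff_ge mem_Collect_eq)
      then have "\<forall>j. 0 \<le> \<psi> x $ j" by blast
      then have "\<psi> x \<in> convex hull (rows M)" using hyp psi_aff by blast
      then obtain y where "y \<in> P" "\<psi> x = \<psi> y" using conv by auto
      then show "x \<in> P" using inj[of x y] x PRn by auto
    qed
  qed
  have "dim_ge_1 P"
    unfolding dim_ge_1_def P_def
    using i12 psiV by (metis hull_inc rangeI)
  moreover have "slack_matrix_of n P M"
    unfolding slack_matrix_of_def
    apply (rule exI[of _ V], rule exI[of _ W], rule exI[of _ w])
    using V Peq psi_comp psiV by (auto simp: W_def Rn_def P_def)
  ultimately show ?thesis unfolding is_slack_matrix_def by blast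
qed


lemma two_rows:
  fixes M :: "real^'q^'p"
  assumes "rank M \<ge> 2"
  shows "\<exists>i1 i2. M $ i1 \<noteq> M $ i2"
proof (rule ccontr)
  assume "\<not> ?thesis"
  then have "rows M \<subseteq> {M $ i} " for i unfolding rows_eq by auto
  then have "dim (rows M) \<le> dim {M $ undefined}" by (rule dim_subset)
  also have "\<dots> \<le> 1" by simp
  finally show False using assms unfolding row_rank_def by simp
qed

theorem corollary2p8:
  fixes M :: "real^'q^'p"
  assumes "\<forall>i j. 0 \<le> M $ i $ j"
    and "rank M \<ge> 2"
  shows "is_slack_matrix M \<longleftrightarrow>
           convex hull (rows M) = affine hull (rows M) \<inter> {x. \<forall>j. 0 \<le> x $ j}"
proof
  assume "is_slack_matrix M"
  then obtain n P where "slack_matrix_of n P M" unfolding is_slack_matrix_def by blast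
  then show "convex hull (rows M) = affine hull (rows M) \<inter> {x. \<forall>j. 0 \<le> x $ j}"
    by (rule fwd)
next
  assume h: "convex hull (rows M) = affine hull (rows M) \<inter> {x. \<forall>j. 0 \<le> x $ j}"
  obtain i1 i2 where "M $ i1 \<noteq> M $ i2" using two_rows[OF assms(2)] by blast
  then show "is_slack_matrix M" by (rule bwd[OF h])
qed

end
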